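(* Let $R$ be a total preorder on $\Omega$ and $B : \Omega \to \mathbb{R}$ a bound. Then $B$ is consistent with $R$ if and only if both of the following hold: $B(\mathbf{x}) \le B(\mathbf{y})$ whenever $\mathbf{x} <_R \mathbf{y}$, and $B(\mathbf{x}) = B(\mathbf{y})$ whenever $\mathbf{x} \sim_R \mathbf{y}$.
   Context: $\Omega$ is a finite set (of samples). A total preorder $R$ on $\Omega$ is a reflexive, transitive relation $\lesssim_R$ such that for all $\mathbf{x},\mathbf{y}$, $\mathbf{x} \lesssim_R \mathbf{y}$ or $\mathbf{y} \lesssim_R \mathbf{x}$; write $\mathbf{x} \sim_R \mathbf{y}$ if both hold and $\mathbf{x} <_R \mathbf{y}$ if $\mathbf{x} \lesssim_R \mathbf{y}$ but not $\mathbf{x} \sim_R \mathbf{y}$. A total order $T$ on $\Omega$ (with $\le_T$, $<_T$) is a total preorder in which $\mathbf{x} \sim_T \mathbf{y}$ implies $\mathbf{x} = \mathbf{y}$. A bound is any function $B : \Omega \to \mathbb{R}$. $B$ is consistent with a total order $T$ if $\mathbf{x} \le_T \mathbf{y}$ implies $B(\mathbf{x}) \le B(\mathbf{y})$. A total order $T$ agrees with a total preorder $R$ if $\mathbf{x} <_R \mathbf{y}$ implies $\mathbf{x} <_T \mathbf{y}$ for all $\mathbf{x},\mathbf{y} \in \Omega$. $B$ is consistent with the preorder $R$ if it is consistent with every total order that agrees with $R$. *)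

theory Defs
  imports Complex_Main
begin

definition total_preorder_on :: "'a set \<Rightarrow> 'a rel \<Rightarrow> bool" where
  "total_preorder_on \<Omega> R \<longleftrightarrow> R \<subseteq> \<Omega> \<times> \<Omega> \<and> refl_on \<Omega> R \<and> trans R \<and>
     (\<forall>x\<in>\<Omega>. \<forall>y\<in>\<Omega>. (x,y) \<in> R \<or> (y,x) \<in> R)"

definition equiv_R :: "'a rel \<Rightarrow> 'a \<Rightarrow> 'a \<Rightarrow> bool" where
  "equiv_R R x y \<longleftrightarrow> (x,y) \<in> R \<and> (y,x) \<in> R"

definition less_R :: "'a rel \<Rightarrow> 'a \<Rightarrow> 'a \<Rightarrow> bool" where
  "less_R R x y \<longleftrightarrow> (x,y) \<in> R \<and> \<not> equiv_R R x y"

definition total_order_on :: "'a set \<Rightarrow> 'a rel \<Rightarrow> bool" where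
  "total_order_on \<Omega> T \<longleftrightarrow> total_preorder_on \<Omega> T \<and>
     (\<forall>x y. equiv_R T x y \<longrightarrow> x = y)"

definition bound_consistent_order :: "'a rel \<Rightarrow> ('a \<Rightarrow> real) \<Rightarrow> bool" where
  "bound_consistent_order T B \<longleftrightarrow> (\<forall>x y. (x,y) \<in> T \<longrightarrow> B x \<le> B y)"

definition agrees :: "'a set \<Rightarrow> 'a rel \<Rightarrow> 'a rel \<Rightarrow> bool" where
  "agrees \<Omega> T R \<longleftrightarrow> (\<forall>x\<in>\<Omega>. \<forall>y\<in>\<Omega>. less_R R x y \<longrightarrow> less_R T x y)"

definition bound_consistent_preorder :: "'a set \<Rightarrow> 'a rel \<Rightarrow> ('a \<Rightarrow> real) \<Rightarrow> bool" where
  "bound_consistent_preorder \<Omega> R B \<longleftrightarrow>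
     (\<forall>T. total_order_on \<Omega> T \<and> agrees \<Omega> T R \<longrightarrow> bound_consistent_order T B)"

end

theory Submission
  imports Defs
begin

definition lexT :: "'a set \<Rightarrow> 'a rel \<Rightarrow> ('a \<Rightarrow> int) \<Rightarrow> 'a rel" where
  "lexT \<Omega> R f = {(a,b). a \<in> \<Omega> \<and> b \<in> \<Omega> \<and> (a,b) \<in> R \<and> ((b,a) \<notin> R \<or> f a \<le> f b)}"

lemma lexT_ok:
  assumes tp: "total_preorder_on \<Omega> R" and inj: "inj_on f \<Omega>"
  shows "total_order_on \<Omega> (lexT \<Omega> R f) \<and> agrees \<Omega> (lexT \<Omega> R f) R"
proof -
  have sub: "R \<subseteq> \<Omega> \<times> \<Omega>" and rf: "refl_on \<Omega> R" and tr: "trans R"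
    and tot: "\<forall>x\<in>\<Omega>. \<forall>y\<in>\<Omega>. (x,y) \<in> R \<or> (y,x) \<in> R"
    using tp by (auto simp: total_preorder_on_def)
  have r: "x \<in> \<Omega> \<Longrightarrow> (x,x) \<in> R" for x using rf by (auto simp: refl_on_def)
  have t: "(x,y) \<in> R \<Longrightarrow> (y,z) \<in> R \<Longrightarrow> (x,z) \<in> R" for x y z using tr by (meson transD)
  have "lexT \<Omega> R f \<subseteq> \<Omega> \<times> \<Omega>" by (auto simp: lexT_def)
  moreover have "refl_on \<Omega> (lexT \<Omega> R f)"
    using r by (auto simp: refl_on_def lexT_def)
  moreover have "trans (lexT \<Omega> R f)"
  proof (rule transI)
    fix x y z assume a: "(x,y) \<in> lexT \<Omega> R f" "(y,z) \<in> lexT \<Omega> R f"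
    then have xy: "(x,y) \<in> R" "(y,z) \<in> R" "x \<in> \<Omega>" "z \<in> \<Omega>" by (auto simp: lexT_def)
    then have xz: "(x,z) \<in> R" using t by blast
    show "(x,z) \<in> lexT \<Omega> R f"
    proof (cases "(z,x) \<in> R")
      case False then show ?thesis using xz xy by (auto simp: lexT_def)
    next
      case True
      then have "(z,y) \<in> R" "(y,x) \<in> R" using t xy by blast+
      then have "f x \<le> f y" "f y \<le> f z" using a by (auto simp: lexT_def)
      then show ?thesis using xz xy by (auto simp: lexT_def)
    qed
  qed
  moreover have "\<forall>x\<in>\<Omega>. \<forall>y\<in>\<Omega>. (x,y) \<in> lexT \<Omega> R f \<or> (y,x) \<in> lexT \<Omega> R f"
    using tot unfolding lexT_def by auto
  moreover have "\<forall>x y. equiv_R (lexT \<Omega> R f) x y \<longrightarrow> x = y"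
    using inj unfolding equiv_R_def lexT_def inj_on_def by auto
  moreover have "agrees \<Omega> (lexT \<Omega> R f) R"
    unfolding agrees_def less_R_def equiv_R_def lexT_def by auto
  ultimately show ?thesis by (simp add: total_order_on_def total_preorder_on_def)
qed

theorem lemma3:
  fixes \<Omega> :: "'a set" and R :: "'a rel" and B :: "'a \<Rightarrow> real"
  assumes "finite \<Omega>"
    and "total_preorder_on \<Omega> R"
  shows "bound_consistent_preorder \<Omega> R B \<longleftrightarrow>
    ((\<forall>x\<in>\<Omega>. \<forall>y\<in>\<Omega>. less_R R x y \<longrightarrow> B x \<le> B y) \<and>
     (\<forall>x\<in>\<Omega>. \<forall>y\<in>\<Omega>. equiv_R R x y \<longrightarrow> B x = B y))"
proof
  assume bc: "bound_consistent_preorder \<Omega> R B"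
  obtain g :: "'a \<Rightarrow> nat" and n where "g ` \<Omega> = {i. i < n}" "inj_on g \<Omega>"
    using finite_imp_inj_to_nat_seg[OF assms(1)] by blast
  define f where "f = (\<lambda>z. int (g z))"
  have injf: "inj_on f \<Omega>" using \<open>inj_on g \<Omega>\<close> unfolding f_def inj_on_def by auto
  have injf2: "inj_on (\<lambda>z. - f z) \<Omega>" using injf unfolding inj_on_def by auto
  have c1: "bound_consistent_order (lexT \<Omega> R f) B"
    using bc lexT_ok[OF assms(2) injf] by (auto simp: bound_consistent_preorder_def)
  have c2: "bound_consistent_order (lexT \<Omega> R (\<lambda>z. - f z)) B"
    using bc lexT_ok[OF assms(2) injf2] by (auto simp: bound_consistent_preorder_def)
  show "(\<forall>x\<in>\<Omega>. \<forall>y\<in>\<Omega>. less_R R x y \<longrightarrow> B x \<le> B y) \<and>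
     (\<forall>x\<in>\<Omega>. \<forall>y\<in>\<Omega>. equiv_R R x y \<longrightarrow> B x = B y)"
  proof (intro conjI ballI impI)
    fix x y assume "x \<in> \<Omega>" "y \<in> \<Omega>" "less_R R x y"
    then have "(x,y) \<in> lexT \<Omega> R f" unfolding lexT_def less_R_def equiv_R_def by auto
    then show "B x \<le> B y" using c1 by (auto simp: bound_consistent_order_def)
  next
    fix x y assume xy: "x \<in> \<Omega>" "y \<in> \<Omega>" "equiv_R R x y"
    have "B x \<le> B y \<and> B y \<le> B x"
    proof (cases "f x \<le> f y")
      case True
      then have "(x,y) \<in> lexT \<Omega> R f" "(y,x) \<in> lexT \<Omega> R (\<lambda>z. - f z)"
        using xy unfolding lexT_def equiv_R_def by auto
      then show ?thesis using c1 c2 by (auto simp: bound_consistent_order_def)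
    next
      case False
      then have "(y,x) \<in> lexT \<Omega> R f" "(x,y) \<in> lexT \<Omega> R (\<lambda>z. - f z)"
        using xy unfolding lexT_def equiv_R_def by auto
      then show ?thesis using c1 c2 by (auto simp: bound_consistent_order_def)
    qed
    then show "B x = B y" by auto
  qed
next
  assume h: "(\<forall>x\<in>\<Omega>. \<forall>y\<in>\<Omega>. less_R R x y \<longrightarrow> B x \<le> B y) \<and>
     (\<forall>x\<in>\<Omega>. \<forall>y\<in>\<Omega>. equiv_R R x y \<longrightarrow> B x = B y)"
  show "bound_consistent_preorder \<Omega> R B"
    unfolding bound_consistent_preorder_def bound_consistent_order_def
  proof (intro allI impI)
    fix T x y assume T: "total_order_on \<Omega> T \<and> agrees \<Omega> T R" and xyT: "(x,y) \<in> T"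
    have sub: "T \<subseteq> \<Omega> \<times> \<Omega>" and anti: "\<forall>x y. equiv_R T x y \<longrightarrow> x = y"
      using T by (auto simp: total_order_on_def total_preorder_on_def)
    have xy: "x \<in> \<Omega>" "y \<in> \<Omega>" using sub xyT by auto
    have tot: "(x,y) \<in> R \<or> (y,x) \<in> R"
      using assms(2) xy by (auto simp: total_preorder_on_def)
    show "B x \<le> B y"
    proof (cases "less_R R y x")
      case True
      then have "less_R T y x" using T xy by (auto simp: agrees_def)
      then show ?thesis using xyT by (auto simp: less_R_def equiv_R_def)
    next
      case False
      then have "less_R R x y \<or> equiv_R R x y"
        using tot by (auto simp: less_R_def equiv_R_def)
      then show ?thesis using h xy by force
    qed
  qed
qed

end
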